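(* Define $f:\mathbb N\to\mathbb N$ by $$f(n)=\begin{cases}\lfloor\varphi n\rfloor+1, & n\in R_{0,0},\\ \lfloor(\varphi-1)n\rfloor, & n\in R_{1,0}.\end{cases}$$ Then $f$ is an $R_{i,j}$-permutation of $\mathbb N$ of order $2$ (i.e. $f$ is a bijection of $\mathbb N$, $f\circ f=\mathrm{id}$ and $f\neq\mathrm{id}$). Its first values are $2,1,5,7,3,10,4,13,15,6,\dots$.
   Context: $\mathbb N=\{1,2,\dots\}$, $\varphi=\frac{1+\sqrt5}{2}$. $F$ denotes the Fibonacci numbers ($F(0)=0,F(1)=F(2)=1$). $R_{i,j}$ ($i\in\mathbb Z^{\ge0},j\in\mathbb Z$) is the range of $n\mapsto F(i+1)\lfloor n\varphi\rfloor+F(i)n-j$, $n\in\mathbb N$; thus $R_{0,0}=\{\lfloor n\varphi\rfloor\}$ and $R_{1,0}=\{\lfloor n\varphi^2\rfloor\}$. An $R_{i,j}$-permutation is a permutation $\pi$ of $\mathbb N$ defined piecewise on a finite partition of $\mathbb N$ into sets $R_{i,j}$, with $\pi(n)=\lfloor(a\varphi+b)n+c\rfloor$ for $n$ in a given piece, for integers $a,b,c$ depending on the piece. *)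

theory Defs
  imports Complex_Main "HOL-Number_Theory.Fib"
begin

definition phi :: real where "phi = (1 + sqrt 5) / 2"

definition Rset :: "nat \<Rightarrow> int \<Rightarrow> int set" where
  "Rset i j = {int (fib (i+1)) * \<lfloor>real n * phi\<rfloor> + int (fib i) * int n - j | n::nat. n \<ge> 1}"

definition is_Rperm :: "(nat \<Rightarrow> nat) \<Rightarrow> bool" where
  "is_Rperm p \<longleftrightarrow> bij_betw p {1..} {1..} \<and>
    (\<exists>P :: (nat \<times> int \<times> int \<times> int \<times> int) list.
       (\<forall>k < length P. case P ! k of (i, j, a, b, c) \<Rightarrow> Rset i j \<subseteq> {1..}) \<and>
       (\<forall>n::nat. n \<ge> 1 \<longrightarrow> (\<exists>!k. k < length P \<and>
            (case P ! k of (i, j, a, b, c) \<Rightarrow> int n \<in> Rset i j))) \<and>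
       (\<forall>k < length P. case P ! k of (i, j, a, b, c) \<Rightarrow>
            (\<forall>n::nat. n \<ge> 1 \<longrightarrow> int n \<in> Rset i j \<longrightarrow>
               int (p n) = \<lfloor>(real_of_int a * phi + real_of_int b) * real n + real_of_int c\<rfloor>)))"

text \<open>The map f of the theorem (only meaningful on {1,2,...}; the last branch is never
  used there since Rset 0 0 and Rset 1 0 partition {1,2,...}).\<close>
definition f :: "nat \<Rightarrow> nat" where
  "f n = (if int n \<in> Rset 0 0 then nat (\<lfloor>phi * real n\<rfloor> + 1)
          else if int n \<in> Rset 1 0 then nat \<lfloor>(phi - 1) * real n\<rfloor>
          else n)"

end

theory Submission imports Defs "HOL-Computational_Algebra.Primes" begin
lemma p5: "prime (5::int)" unfolding prime_int_numeral_eq by code_simp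
lemma no5: "(r::int)^2 = 5 * q^2 \<Longrightarrow> q = 0"
proof (induction "nat \<bar>q\<bar>" arbitrary: q r rule: less_induct)
  case less
  have "5 dvd r^2" using less.prems by simp
  then have "5 dvd r" using p5 prime_dvd_power by blast
  then obtain s where s: "r = 5*s" by blast
  then have "q^2 = 5 * s^2" using less.prems by (simp add: power_mult_distrib)
  then have "5 dvd q^2" by simp
  then have "5 dvd q" using p5 prime_dvd_power by blast
  then obtain t where t: "q = 5*t" by blast
  then have "s^2 = 5*t^2" using \<open>q^2 = 5 * s^2\<close> by (simp add: power_mult_distrib)
  show ?case
  proof (rule ccontr)
    assume "q \<noteq> 0"
    then have "nat \<bar>t\<bar> < nat \<bar>q\<bar>" using t by auto
    from less.hyps[OF this \<open>s^2 = 5*t^2\<close>] have "t = 0" .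
    with t \<open>q \<noteq> 0\<close> show False by simp
  qed
qed
lemma phi_irr: "real_of_int q * phi = real_of_int p \<Longrightarrow> q = 0"
proof -
  assume h: "real_of_int q * phi = real_of_int p"
  have "real_of_int q * sqrt 5 = real_of_int (2*p - q)" using h by (simp add: phi_def field_simps)
  then have "(real_of_int q * sqrt 5)^2 = (real_of_int (2*p - q))^2" by simp
  then have "real_of_int (5*q^2) = real_of_int ((2*p-q)^2)" by (simp add: power_mult_distrib)
  then have "(2*p-q)^2 = 5*q^2" by linarith
  then show "q = 0" by (rule no5)
qed
lemma phi_sq: "phi^2 = phi + 1"
  by (simp add: phi_def power2_eq_square field_simps)
lemma sqrt5_bounds: "2.22 < sqrt 5" "sqrt 5 < 2.24"
proof -
  have "sqrt (2.22^2) < sqrt 5" by (subst real_sqrt_less_iff) (simp add: power2_eq_square)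
  then show "2.22 < sqrt 5" by simp
  have "sqrt 5 < sqrt (2.24^2)" by (subst real_sqrt_less_iff) (simp add: power2_eq_square)
  then show "sqrt 5 < 2.24" by simp
qed
lemma phi_bounds: "1.61 < phi" "phi < 1.62"
  using sqrt5_bounds by (simp_all add: phi_def)

definition A :: "nat \<Rightarrow> int" where "A m = \<lfloor>real m * phi\<rfloor>"

lemma A_lt: "m \<ge> 1 \<Longrightarrow> real_of_int (A m) < real m * phi"
proof -
  assume m: "m \<ge> 1"
  have "real_of_int (A m) \<le> real m * phi" unfolding A_def by simp
  moreover have "real_of_int (A m) \<noteq> real m * phi"
  proof
    assume "real_of_int (A m) = real m * phi"
    then have "real_of_int (int m) * phi = real_of_int (A m)" by simp
    from phi_irr[OF this] m show False by simp
  qed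
  ultimately show ?thesis by simp
qed

lemma A_gt: "real m * phi < real_of_int (A m) + 1"
  unfolding A_def by linarith

lemma key1: "m \<ge> 1 \<Longrightarrow> \<lfloor>phi * real_of_int (A m)\<rfloor> = A m + int m - 1"
proof -
  assume m: "m \<ge> 1"
  define x where "x = real m * phi - real_of_int (A m)"
  have x0: "0 < x" "x < 1" using A_lt[OF m] A_gt[of m] by (simp_all add: x_def)
  have eq: "phi * real_of_int (A m) = real_of_int (A m) + real m - (phi - 1) * x"
  proof -
    have "phi * real_of_int (A m) = phi * (real m * phi - x)" by (simp add: x_def)
    also have "\<dots> = real m * phi^2 - phi * x" by (simp add: power2_eq_square algebra_simps)
    also have "\<dots> = real m * phi + real m - phi * x" by (simp add: phi_sq algebra_simps)
    finally show ?thesis by (simp add: x_def algebra_simps)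
  qed
  have "0 < (phi - 1) * x" "(phi - 1) * x < 1"
    using x0 phi_bounds mult_strict_mono[of "phi - 1" 1 x 1] mult_strict_mono[of "2 - phi" 1 x 1] by auto
  then show ?thesis unfolding eq by (intro floor_unique) simp_all
qed

lemma key2: "m \<ge> 1 \<Longrightarrow> \<lfloor>(phi - 1) * real_of_int (A m + int m)\<rfloor> = A m"
proof -
  assume m: "m \<ge> 1"
  define x where "x = real m * phi - real_of_int (A m)"
  have x0: "0 < x" "x < 1" using A_lt[OF m] A_gt[of m] by (simp_all add: x_def)
  have eq: "(phi - 1) * real_of_int (A m + int m) = real_of_int (A m) + (2 - phi) * x"
  proof -
    have "(phi - 1) * real_of_int (A m + int m) = (phi - 1) * (real m * phi - x + real m)" by (simp add: x_def)
    also have "\<dots> = real m * phi^2 - real m - (phi - 1) * x" by (simp add: power2_eq_square algebra_simps)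
    also have "\<dots> = real m * phi - (phi - 1) * x" by (simp add: phi_sq algebra_simps)
    finally show ?thesis by (simp add: x_def algebra_simps)
  qed
  have "0 < (2 - phi) * x" "(2 - phi) * x < 1"
    using x0 phi_bounds mult_strict_mono[of "phi - 1" 1 x 1] mult_strict_mono[of "2 - phi" 1 x 1] by auto
  then show ?thesis unfolding eq by (intro floor_unique) simp_all
qed
lemma phi_pos: "phi > 0" using phi_bounds by simp
lemma phi_gt1: "phi > 1" using phi_bounds by simp
lemma phi_sq': "phi * phi = phi + 1" using phi_sq by (simp add: power2_eq_square)

lemma memA: "x \<in> Rset 0 0 \<longleftrightarrow> (\<exists>m\<ge>1. x = A m)"
  by (auto simp: Rset_def A_def)
lemma memB: "x \<in> Rset 1 0 \<longleftrightarrow> (\<exists>m\<ge>1. x = A m + int m)"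
  by (auto simp: Rset_def A_def numeral_2_eq_2)

lemma A_pos: "m \<ge> 1 \<Longrightarrow> A m \<ge> 1"
proof -
  assume "m \<ge> 1"
  then have "real m * phi \<ge> 1 * phi" using phi_pos by (intro mult_right_mono) auto
  then have "real m * phi \<ge> 1" using phi_gt1 by linarith
  then show ?thesis unfolding A_def by (simp add: le_floor_iff)
qed

lemma disj: "m \<ge> 1 \<Longrightarrow> k \<ge> 1 \<Longrightarrow> A m \<noteq> A k + int k"
proof
  assume m: "m \<ge> 1" and k: "k \<ge> 1" and e: "A m = A k + int k"
  define n where "n = real_of_int (A m)"
  have a1: "n < real m * phi" "real m * phi < n + 1" using A_lt[OF m] A_gt[of m] by (simp_all add: n_def)
  have a2: "n < real k * phi + real k" "real k * phi + real k < n + 1"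
    using A_lt[OF k] A_gt[of k] e by (simp_all add: n_def)
  have "n * phi < real m * phi * phi" using a1 phi_pos by simp
  moreover have "real m * phi * phi < (n+1) * phi" using a1 phi_pos by simp
  moreover have "real m * phi * phi = real m * phi + real m"
    by (simp only: mult.assoc phi_sq' distrib_left mult_1_right)
  ultimately have b: "n * phi < real m * phi + real m" "real m * phi + real m < (n+1) * phi"
    by simp_all
  have "n * (phi + 1) < (real m + real k) * (phi + 1)" using a2 b by (simp add: algebra_simps)
  then have c1: "n < real m + real k" using phi_pos mult_less_cancel_right_pos[of "phi + 1"] by simp
  have "(real m + real k) * (phi + 1) < (n + 1) * (phi + 1)" using a2 b by (simp add: algebra_simps)
  then have c2: "real m + real k < n + 1" using phi_pos mult_less_cancel_right_pos[of "phi + 1"] by simp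
  have "real_of_int (A m) < real_of_int (int m + int k)" using c1 by (simp add: n_def)
  then have d1: "A m < int m + int k" by (simp only: of_int_less_iff)
  have "real_of_int (int m + int k) < real_of_int (A m + 1)" using c2 by (simp add: n_def)
  then have d2: "int m + int k < A m + 1" by (simp only: of_int_less_iff)
  from d1 d2 show False by linarith
qed

lemma cover: "n \<ge> 1 \<Longrightarrow> (\<exists>m\<ge>1. int n = A m) \<or> (\<exists>m\<ge>1. int n = A m + int m)"
proof -
  assume n: "n \<ge> 1"
  define i where "i = \<lfloor>(real n + 1) / phi\<rfloor>"
  have "real_of_int i \<le> (real n + 1) / phi" "(real n + 1) / phi < real_of_int i + 1"
    unfolding i_def by linarith+
  then have h1: "real_of_int i * phi \<le> real n + 1" and h2: "real n + 1 < (real_of_int i + 1) * phi"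
    using phi_pos by (simp_all add: field_simps)
  have ne: "real_of_int i * phi \<noteq> real n + 1"
  proof
    assume "real_of_int i * phi = real n + 1"
    then have "real_of_int i * phi = real_of_int (int n + 1)" by simp
    from phi_irr[OF this] have "i = 0" .
    with \<open>real_of_int i * phi = real n + 1\<close> show False by simp
  qed
  show ?thesis
  proof (cases "real_of_int i * phi > real n")
    case True
    have "i > 0"
    proof (rule ccontr)
      assume "\<not> i > 0"
      then have "real_of_int i \<le> 0" by simp
      then have "real_of_int i * phi \<le> 0" using phi_pos by (simp add: mult_nonpos_nonneg)
      with True show False by simp
    qed
    define m where "m = nat i"
    have mi: "real m = real_of_int i" using \<open>i > 0\<close> by (simp add: m_def)
    have "A m = int n" unfolding A_def mi using True h1 ne by (intro floor_unique) simp_all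
    moreover have "m \<ge> 1" using \<open>i > 0\<close> by (simp add: m_def)
    ultimately show ?thesis by auto
  next
    case False
    have i0: "i \<ge> 0" unfolding i_def using phi_pos by simp
    have le: "real_of_int i \<le> real_of_int i * phi" using i0 phi_bounds by (simp add: mult_le_cancel_left1)
    have nl: "real n * 1 < real n * phi"
      by (rule mult_strict_left_mono) (use phi_bounds n in auto)
    have "real_of_int i < real n"
    proof (rule ccontr)
      assume "\<not> real_of_int i < real n"
      then have "real_of_int i = real n" using le False by linarith
      then have "real_of_int i * phi = real n * phi" by simp
      then show False using False nl by linarith
    qed
    then have iln: "i < int n" by linarith
    define m where "m = nat (int n - i)"
    have mi: "real m = real n - real_of_int i" using iln by (simp add: m_def)
    have "real_of_int i * phi * phi \<le> real n * phi" using False phi_pos by (simp add: mult_right_mono)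
    moreover have "real_of_int i * phi * phi = real_of_int i * phi + real_of_int i"
      by (simp only: mult.assoc phi_sq' distrib_left mult_1_right)
    ultimately have "real_of_int i * phi + real_of_int i \<le> real n * phi" by simp
    then have u1: "real_of_int i \<le> real m * phi" unfolding mi by (simp add: algebra_simps)
    have "(real n + 1) * phi < (real_of_int i + 1) * phi * phi" using h2 phi_pos by simp
    moreover have "(real_of_int i + 1) * phi * phi = (real_of_int i + 1) * phi + (real_of_int i + 1)"
      by (simp only: mult.assoc phi_sq' distrib_left mult_1_right)
    ultimately have "(real n + 1) * phi < (real_of_int i + 1) * phi + (real_of_int i + 1)" by simp
    then have u2: "real m * phi < real_of_int i + 1" unfolding mi by (simp add: algebra_simps)
    have "A m = i" unfolding A_def using u1 u2 by (intro floor_unique) simp_all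
    then have "int n = A m + int m" using iln by (simp add: m_def)
    moreover have "m \<ge> 1" using iln by (simp add: m_def)
    ultimately show ?thesis by auto
  qed
qed
lemma fA: "m \<ge> 1 \<Longrightarrow> f (nat (A m)) = nat (A m + int m)"
proof -
  assume m: "m \<ge> 1"
  have p: "A m \<ge> 1" using A_pos[OF m] .
  have "int (nat (A m)) \<in> Rset 0 0" using m p by (auto simp: memA)
  moreover have "real (nat (A m)) = real_of_int (A m)" using p by simp
  ultimately show ?thesis unfolding f_def using key1[OF m] by simp
qed

lemma fB: "m \<ge> 1 \<Longrightarrow> f (nat (A m + int m)) = nat (A m)"
proof -
  assume m: "m \<ge> 1"
  have p: "A m \<ge> 1" using A_pos[OF m] .
  have "int (nat (A m + int m)) \<in> Rset 1 0" unfolding memB using m p by auto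
  moreover have "int (nat (A m + int m)) \<notin> Rset 0 0"
  proof
    assume "int (nat (A m + int m)) \<in> Rset 0 0"
    then obtain k where k: "k \<ge> 1" "int (nat (A m + int m)) = A k" unfolding memA by blast
    then have "A k = A m + int m" using p by simp
    with disj[OF k(1) m] show False by simp
  qed
  moreover have "real (nat (A m + int m)) = real_of_int (A m + int m)" using p by simp
  ultimately show ?thesis unfolding f_def using key2[OF m] by simp
qed

lemma f_cases: "n \<ge> 1 \<Longrightarrow> (\<exists>m\<ge>1. n = nat (A m) \<and> f n = nat (A m + int m)) \<or>
   (\<exists>m\<ge>1. n = nat (A m + int m) \<and> f n = nat (A m))"
proof -
  assume n: "n \<ge> 1"
  from cover[OF n] show ?thesis
  proof
    assume "\<exists>m\<ge>1. int n = A m"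
    then obtain m where m: "m \<ge> 1" "int n = A m" by blast
    then have "n = nat (A m)" by simp
    with fA[OF m(1)] m(1) show ?thesis by blast
  next
    assume "\<exists>m\<ge>1. int n = A m + int m"
    then obtain m where m: "m \<ge> 1" "int n = A m + int m" by blast
    then have "n = nat (A m + int m)" by simp
    with fB[OF m(1)] m(1) show ?thesis by blast
  qed
qed

lemma xor: "n \<ge> 1 \<Longrightarrow> (int n \<in> Rset 0 0) \<noteq> (int n \<in> Rset 1 0)"
proof -
  assume n: "n \<ge> 1"
  from cover[OF n] show ?thesis
  proof
    assume "\<exists>m\<ge>1. int n = A m"
    then obtain m where m: "m \<ge> 1" "int n = A m" by blast
    have "int n \<notin> Rset 1 0"
    proof
      assume "int n \<in> Rset 1 0"
      then obtain k where "k \<ge> 1" "int n = A k + int k" unfolding memB by blast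
      with disj[OF m(1) this(1)] m show False by simp
    qed
    moreover have "int n \<in> Rset 0 0" unfolding memA using m by blast
    ultimately show ?thesis by blast
  next
    assume "\<exists>m\<ge>1. int n = A m + int m"
    then obtain m where m: "m \<ge> 1" "int n = A m + int m" by blast
    have "int n \<notin> Rset 0 0"
    proof
      assume "int n \<in> Rset 0 0"
      then obtain k where "k \<ge> 1" "int n = A k" unfolding memA by blast
      with disj[OF this(1) m(1)] m show False by simp
    qed
    moreover have "int n \<in> Rset 1 0" unfolding memB using m by blast
    ultimately show ?thesis by blast
  qed
qed

lemma ff: "n \<ge> 1 \<Longrightarrow> f (f n) = n"
proof -
  assume n: "n \<ge> 1"
  from f_cases[OF n] show ?thesis
  proof
    assume "\<exists>m\<ge>1. n = nat (A m) \<and> f n = nat (A m + int m)"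
    then obtain m where "m \<ge> 1" "n = nat (A m)" "f n = nat (A m + int m)" by blast
    then show ?thesis using fB by simp
  next
    assume "\<exists>m\<ge>1. n = nat (A m + int m) \<and> f n = nat (A m)"
    then obtain m where "m \<ge> 1" "n = nat (A m + int m)" "f n = nat (A m)" by blast
    then show ?thesis using fA by simp
  qed
qed

lemma f_pos: "n \<ge> 1 \<Longrightarrow> f n \<ge> 1"
proof -
  assume n: "n \<ge> 1"
  from f_cases[OF n] show ?thesis
  proof
    assume "\<exists>m\<ge>1. n = nat (A m) \<and> f n = nat (A m + int m)"
    then obtain m where "m \<ge> 1" "f n = nat (A m + int m)" by blast
    moreover have "A m \<ge> 1" using A_pos calculation(1) by blast
    ultimately show ?thesis by simp
  next
    assume "\<exists>m\<ge>1. n = nat (A m + int m) \<and> f n = nat (A m)"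
    then obtain m where "m \<ge> 1" "f n = nat (A m)" by blast
    moreover have "A m \<ge> 1" using A_pos calculation(1) by blast
    ultimately show ?thesis by simp
  qed
qed

lemma A_vals: "A 1 = 1" "A 2 = 3" "A 3 = 4" "A 4 = 6" "A 5 = 8" "A 6 = 9"
  unfolding A_def using phi_bounds by (simp_all add: floor_unique)

lemma f_vals: "map f [1..<11] = [2, 1, 5, 7, 3, 10, 4, 13, 15, 6]"
proof -
  have "f 1 = 2" using fA[of 1] A_vals by simp
  moreover have "f 2 = 1" using fB[of 1] A_vals by simp
  moreover have "f 3 = 5" using fA[of 2] A_vals by simp
  moreover have "f 4 = 7" using fA[of 3] A_vals by simp
  moreover have "f 5 = 3" using fB[of 2] A_vals by simp
  moreover have "f 6 = 10" using fA[of 4] A_vals by simp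
  moreover have "f 7 = 4" using fB[of 3] A_vals by simp
  moreover have "f 8 = 13" using fA[of 5] A_vals by simp
  moreover have "f 9 = 15" using fA[of 6] A_vals by simp
  moreover have "f 10 = 6" using fB[of 4] A_vals by simp
  moreover have "[1..<11] = [1,2,3,4,5,6,7,8,9,10::nat]" by code_simp
  ultimately show ?thesis by (simp only: list.map)
qed

lemma Rperm_main:
  "bij_betw f {1..} {1..} \<and>
   ((\<forall>k < length [(0::nat,0::int,1::int,0::int,1::int),(1,0,1,-1,0)]. case [(0::nat,0::int,1::int,0::int,1::int),(1,0,1,-1,0)] ! k of (i, j, a, b, c) \<Rightarrow> Rset i j \<subseteq> {1..}) \<and>
    (\<forall>n::nat. n \<ge> 1 \<longrightarrow> (\<exists>!k. k < length [(0::nat,0::int,1::int,0::int,1::int),(1,0,1,-1,0)] \<and>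
            (case [(0::nat,0::int,1::int,0::int,1::int),(1,0,1,-1,0)] ! k of (i, j, a, b, c) \<Rightarrow> int n \<in> Rset i j))) \<and>
    (\<forall>k < length [(0::nat,0::int,1::int,0::int,1::int),(1,0,1,-1,0)]. case [(0::nat,0::int,1::int,0::int,1::int),(1,0,1,-1,0)] ! k of (i, j, a, b, c) \<Rightarrow>
            (\<forall>n::nat. n \<ge> 1 \<longrightarrow> int n \<in> Rset i j \<longrightarrow>
               int (f n) = \<lfloor>(real_of_int a * phi + real_of_int b) * real n + real_of_int c\<rfloor>)))"
proof (intro conjI)
    show "bij_betw f {1..} {1..}"
    proof (rule bij_betw_byWitness[where f'=f])
      show "\<forall>a\<in>{1..}. f (f a) = a" using ff by simp
      show "\<forall>a\<in>{1..}. f (f a) = a" using ff by simp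
      show "f ` {1..} \<subseteq> {1..}" using f_pos by auto
      show "f ` {1..} \<subseteq> {1..}" using f_pos by auto
    qed
    have sub0: "Rset 0 0 \<subseteq> {1..}"
    proof
      fix x assume "x \<in> Rset 0 0"
      then obtain m where m: "m \<ge> 1" "x = A m" unfolding memA by blast
      have "A m \<ge> 1" using A_pos[OF m(1)] .
      then show "x \<in> {1..}" using m(2) by simp
    qed
    have sub1: "Rset 1 0 \<subseteq> {1..}"
    proof
      fix x assume "x \<in> Rset 1 0"
      then obtain m where m: "m \<ge> 1" "x = A m + int m" unfolding memB by blast
      have "A m \<ge> 1" using A_pos[OF m(1)] .
      then show "x \<in> {1..}" using m by simp
    qed
    have nth0: "[(0::nat,0::int,1::int,0::int,1::int),(1,0,1,-1,0)] ! 0 = (0,0,1,0,1)" by simp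
    have nth1: "[(0::nat,0::int,1::int,0::int,1::int),(1,0,1,-1,0)] ! 1 = (1,0,1,-1,0)" by simp
    have len: "k < length [(0::nat,0::int,1::int,0::int,1::int),(1,0,1,-1,0)] \<longleftrightarrow> k = 0 \<or> k = 1" for k by auto
    show "\<forall>k < length [(0::nat,0::int,1::int,0::int,1::int),(1,0,1,-1,0)]. case [(0::nat,0::int,1::int,0::int,1::int),(1,0,1,-1,0)] ! k of (i, j, a, b, c) \<Rightarrow> Rset i j \<subseteq> {1..}"
    proof (intro allI impI)
      fix k assume "k < length [(0::nat,0::int,1::int,0::int,1::int),(1,0,1,-1,0)]"
      then have "k = 0 \<or> k = 1" by (simp only: len)
      then show "case [(0::nat,0::int,1::int,0::int,1::int),(1,0,1,-1,0)] ! k of (i, j, a, b, c) \<Rightarrow> Rset i j \<subseteq> {1..}"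
      proof
        assume "k = 0" then show ?thesis by (simp only: nth0 prod.case sub0)
      next
        assume "k = 1" then show ?thesis by (simp only: nth1 prod.case sub1)
      qed
    qed
    show "\<forall>n::nat. n \<ge> 1 \<longrightarrow> (\<exists>!k. k < length [(0::nat,0::int,1::int,0::int,1::int),(1,0,1,-1,0)] \<and>
            (case [(0::nat,0::int,1::int,0::int,1::int),(1,0,1,-1,0)] ! k of (i, j, a, b, c) \<Rightarrow> int n \<in> Rset i j))"
    proof (intro allI impI)
      fix n :: nat assume n: "n \<ge> 1"
      have eq: "(k < length [(0::nat,0::int,1::int,0::int,1::int),(1,0,1,-1,0)] \<and> (case [(0::nat,0::int,1::int,0::int,1::int),(1,0,1,-1,0)] ! k of (i, j, a, b, c) \<Rightarrow> int n \<in> Rset i j)) \<longleftrightarrow>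
             (k = 0 \<and> int n \<in> Rset 0 0) \<or> (k = 1 \<and> int n \<in> Rset 1 0)" for k
      proof -
        have "(k < length [(0::nat,0::int,1::int,0::int,1::int),(1,0,1,-1,0)] \<and> (case [(0::nat,0::int,1::int,0::int,1::int),(1,0,1,-1,0)] ! k of (i, j, a, b, c) \<Rightarrow> int n \<in> Rset i j)) \<longleftrightarrow>
             ((k = 0 \<or> k = 1) \<and> (case [(0::nat,0::int,1::int,0::int,1::int),(1,0,1,-1,0)] ! k of (i, j, a, b, c) \<Rightarrow> int n \<in> Rset i j))"
          by (simp only: len)
        also have "\<dots> \<longleftrightarrow> (k = 0 \<and> int n \<in> Rset 0 0) \<or> (k = 1 \<and> int n \<in> Rset 1 0)"
          by (cases "k = 0"; cases "k = 1") (simp_all only: nth0 nth1 prod.case, simp_all)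
        finally show ?thesis .
      qed
      have x: "(int n \<in> Rset 0 0) \<noteq> (int n \<in> Rset 1 0)" using xor[OF n] .
      show "\<exists>!k. k < length [(0::nat,0::int,1::int,0::int,1::int),(1,0,1,-1,0)] \<and> (case [(0::nat,0::int,1::int,0::int,1::int),(1,0,1,-1,0)] ! k of (i, j, a, b, c) \<Rightarrow> int n \<in> Rset i j)"
        unfolding eq using x by (cases "int n \<in> Rset 0 0") auto
    qed
    have c0: "int (f n) = \<lfloor>(real_of_int 1 * phi + real_of_int 0) * real n + real_of_int 1\<rfloor>"
      if "int n \<in> Rset 0 0" for n
    proof -
      have fe: "f n = nat (\<lfloor>phi * real n\<rfloor> + 1)" using that unfolding f_def by (rule if_P)
      have "\<lfloor>phi * real n\<rfloor> \<ge> 0" using phi_pos by simp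
      then have "int (f n) = \<lfloor>phi * real n\<rfloor> + 1" unfolding fe by simp
      also have "\<dots> = \<lfloor>phi * real n + real_of_int 1\<rfloor>" by (rule floor_add_int)
      also have "phi * real n + real_of_int 1 = (real_of_int 1 * phi + real_of_int 0) * real n + real_of_int 1"
        by simp
      finally show ?thesis .
    qed
    have c1: "int (f n) = \<lfloor>(real_of_int 1 * phi + real_of_int (-1)) * real n + real_of_int 0\<rfloor>"
      if "n \<ge> 1" "int n \<in> Rset 1 0" for n
    proof -
      have "int n \<notin> Rset 0 0" using xor[OF that(1)] that(2) by simp
      then have fe: "f n = nat \<lfloor>(phi - 1) * real n\<rfloor>" using that(2) unfolding f_def
        by (simp only: if_False if_True)
      have "\<lfloor>(phi - 1) * real n\<rfloor> \<ge> 0" using phi_gt1 by simp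
      then have "int (f n) = \<lfloor>(phi - 1) * real n\<rfloor>" unfolding fe by simp
      also have "(phi - 1) * real n = (real_of_int 1 * phi + real_of_int (-1)) * real n + real_of_int 0"
        by simp
      finally show ?thesis .
    qed
    show "\<forall>k < length [(0::nat,0::int,1::int,0::int,1::int),(1,0,1,-1,0)]. case [(0::nat,0::int,1::int,0::int,1::int),(1,0,1,-1,0)] ! k of (i, j, a, b, c) \<Rightarrow>
            (\<forall>n::nat. n \<ge> 1 \<longrightarrow> int n \<in> Rset i j \<longrightarrow>
               int (f n) = \<lfloor>(real_of_int a * phi + real_of_int b) * real n + real_of_int c\<rfloor>)"
    proof (intro allI impI)
      fix k assume "k < length [(0::nat,0::int,1::int,0::int,1::int),(1,0,1,-1,0)]"
      then have "k = 0 \<or> k = 1" by (simp only: len)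
      then show "case [(0::nat,0::int,1::int,0::int,1::int),(1,0,1,-1,0)] ! k of (i, j, a, b, c) \<Rightarrow>
            (\<forall>n::nat. n \<ge> 1 \<longrightarrow> int n \<in> Rset i j \<longrightarrow>
               int (f n) = \<lfloor>(real_of_int a * phi + real_of_int b) * real n + real_of_int c\<rfloor>)"
      proof
        assume "k = 0" then show ?thesis by (simp only: nth0 prod.case) (use c0 in blast)
      next
        assume "k = 1" then show ?thesis by (simp only: nth1 prod.case) (use c1 in blast)
      qed
    qed
qed

lemma Rperm: "is_Rperm f"
  unfolding is_Rperm_def
  apply (rule conjI[OF conjunct1[OF Rperm_main]])
  apply (rule exI[of _ "[(0::nat,0::int,1::int,0::int,1::int),(1,0,1,-1,0)]"])
  apply (rule conjunct2[OF Rperm_main])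
  done

theorem theorem4p1:
  shows "is_Rperm f \<and> (\<forall>n::nat. n \<ge> 1 \<longrightarrow> f (f n) = n) \<and> (\<exists>n::nat. n \<ge> 1 \<and> f n \<noteq> n) \<and>
         map f [1..<11] = [2, 1, 5, 7, 3, 10, 4, 13, 15, 6]"
proof (intro conjI)
  show "\<forall>n::nat. n \<ge> 1 \<longrightarrow> f (f n) = n" using ff by blast
  show "map f [1..<11] = [2, 1, 5, 7, 3, 10, 4, 13, 15, 6]" by (rule f_vals)
  have "f 1 = 2" using fA[of 1] A_vals by simp
  then show "\<exists>n::nat. n \<ge> 1 \<and> f n \<noteq> n" by (intro exI[of _ 1]) simp
  show "is_Rperm f" by (rule Rperm)
qed

end
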